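(* Fix $\rho\in(0,1)$. For each $n\ge 2$ let $X=(X_1,\dots,X_n)'$ be jointly normal with $E[X_i]=0$, $E[X_i^2]=1$ and $\operatorname{Corr}(X_i,X_j)=\rho$ for all $i\neq j$. Let $s_n^2$ be the sample variance of $X$ and $\widehat\rho=(1-s_n^2)\,I(s_n^2<1)$. Then for every sequence of positive reals $(a_n)$ with $a_n=o(n)$, $$\sqrt{a_n}\left(\sqrt{1-\rho}-\sqrt{1-\widehat\rho}\right)\xrightarrow[n\to\infty]{P}0.$$ In particular (taking $a_n=2\ln n$), $\widehat\rho$ satisfies $\sqrt{2\ln n}\,\big(\sqrt{1-\rho}-\sqrt{1-\widehat\rho}\big)\xrightarrow{P}0$.
   Context: The sample variance is $s_n^2=\frac{1}{n-1}X'\left(I_n-\frac1n J_n\right)X$, where $I_n$ is the $n\times n$ identity matrix and $J_n$ the $n\times n$ matrix of ones. $I(\cdot)$ denotes the indicator function. The correlation $\rho$ does not depend on $n$. *)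

theory Defs
  imports "HOL-Probability.Probability" "HOL-Library.Landau_Symbols"
begin

definition normal_rv :: "'a measure \<Rightarrow> ('a \<Rightarrow> real) \<Rightarrow> real \<Rightarrow> real \<Rightarrow> bool" where
  "normal_rv M Y mu s2 \<longleftrightarrow> Y \<in> borel_measurable M \<and> s2 \<ge> 0 \<and>
     (if s2 = 0 then (AE x in M. Y x = mu)
      else distributed M lborel Y (normal_density mu (sqrt s2)))"

(* X_0,...,X_{n-1} jointly normal: every linear combination is (possibly degenerate) normal *)
definition jointly_normal :: "'a measure \<Rightarrow> nat \<Rightarrow> (nat \<Rightarrow> 'a \<Rightarrow> real) \<Rightarrow> bool" where
  "jointly_normal M n X \<longleftrightarrow> (\<forall>i<n. X i \<in> borel_measurable M) \<and>
     (\<forall>c :: nat \<Rightarrow> real. \<exists>mu s2. normal_rv M (\<lambda>\<omega>. \<Sum>i<n. c i * X i \<omega>) mu s2)"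

definition covariance :: "'a measure \<Rightarrow> ('a \<Rightarrow> real) \<Rightarrow> ('a \<Rightarrow> real) \<Rightarrow> real" where
  "covariance M Y Z = (\<integral>\<omega>. (Y \<omega> - (\<integral>x. Y x \<partial>M)) * (Z \<omega> - (\<integral>x. Z x \<partial>M)) \<partial>M)"

definition correlation :: "'a measure \<Rightarrow> ('a \<Rightarrow> real) \<Rightarrow> ('a \<Rightarrow> real) \<Rightarrow> real" where
  "correlation M Y Z = covariance M Y Z / sqrt (covariance M Y Y * covariance M Z Z)"

(* sample variance s_n^2 = 1/(n-1) X'(I_n - (1/n) J_n) X, with X indexed by 0..n-1 *)
definition sample_var :: "nat \<Rightarrow> (nat \<Rightarrow> real) \<Rightarrow> real" where
  "sample_var n x = 1 / (real n - 1) *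
     (\<Sum>i<n. \<Sum>j<n. x i * ((if i = j then 1 else 0) - 1 / real n) * x j)"

definition rho_hat :: "nat \<Rightarrow> (nat \<Rightarrow> real) \<Rightarrow> real" where
  "rho_hat n x = (1 - sample_var n x) * of_bool (sample_var n x < 1)"

end

theory Submission
  imports Defs "HOL-Real_Asymp.Real_Asymp"
begin


lemma normal_rv_moments:
  assumes P: "prob_space M" and N: "normal_rv M Y mu sg"
  shows "integrable M (\<lambda>x. (Y x - mu)^k)"
    and "(\<integral>x. (Y x - mu)^2 \<partial>M) = sg"
    and "(\<integral>x. (Y x - mu)^4 \<partial>M) = 3 * sg^2"
    and "(\<integral>x. (Y x - mu) \<partial>M) = 0"
proof -
  interpret prob_space M by fact
  have Ym[measurable]: "Y \<in> borel_measurable M" and s0: "sg \<ge> 0" using N by (auto simp: normal_rv_def)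
  have "integrable M (\<lambda>x. (Y x - mu)^k) \<and> (\<integral>x. (Y x - mu)^2 \<partial>M) = sg \<and>
     (\<integral>x. (Y x - mu)^4 \<partial>M) = 3 * sg^2 \<and> (\<integral>x. (Y x - mu) \<partial>M) = 0"
  proof (cases "sg = 0")
    case True
    then have ae: "AE x in M. Y x = mu" using N by (auto simp: normal_rv_def)
    have z: "AE x in M. (Y x - mu)^j = 0" if "j > 0" for j :: nat using ae by (rule AE_mp) (use that in auto)
    have i: "integrable M (\<lambda>x. (Y x - mu)^j)" for j
    proof (cases "j = 0")
      case True then show ?thesis by simp
    next
      case False
      show ?thesis by (rule integrable_cong_AE_imp[of _ "\<lambda>_. 0"]) (use z[of j] False in \<open>auto elim: AE_mp\<close>)
    qed
    have "(\<integral>x. (Y x - mu)^j \<partial>M) = 0" if "j > 0" for j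
      using integral_cong_AE[of "\<lambda>x. (Y x - mu)^j" M "\<lambda>_. 0"] z[OF that] by simp
    from this[of 1] this[of 2] this[of 4] i True show ?thesis by simp
  next
    case False
    define \<sigma> where "\<sigma> = sqrt sg"
    have sp: "\<sigma> > 0" using False s0 by (simp add: \<sigma>_def)
    have veq: "sg = \<sigma>^2" using s0 by (simp add: \<sigma>_def)
    have D: "distributed M lborel Y (normal_density mu \<sigma>)" using N False by (simp add: normal_rv_def \<sigma>_def)
    have int: "integrable M (\<lambda>x. (Y x - mu)^j)" for j
      using distributed_integrable[OF D, of "\<lambda>x. (x - mu)^j"] integrable_normal_moment[OF sp, of mu j] by simp
    have ii: "(\<integral>x. (Y x - mu)^j \<partial>M) = (\<integral>x. normal_density mu \<sigma> x * (x - mu)^j \<partial>lborel)" for j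
      using distributed_integral[OF D, of "\<lambda>x. (x - mu)^j"] by simp
    have e1: "(\<integral>x. (Y x - mu)^2 \<partial>M) = sg"
      using ii[of "2*1"] integral_normal_moment_even[OF sp, of mu 1] sp by (simp add: veq)
    have e2: "(\<integral>x. (Y x - mu)^4 \<partial>M) = 3 * sg^2"
      using ii[of "2*2"] integral_normal_moment_even[OF sp, of mu 2] sp
      by (simp add: veq fact_numeral power_mult_distrib field_simps eval_nat_numeral)
    have e3: "(\<integral>x. (Y x - mu) \<partial>M) = 0"
      using ii[of "2*0+1"] integral_normal_moment_odd[OF sp, of mu 0] by simp
    show ?thesis using int e1 e2 e3 by simp
  qed
  then show "integrable M (\<lambda>x. (Y x - mu)^k)" "(\<integral>x. (Y x - mu)^2 \<partial>M) = sg"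
    "(\<integral>x. (Y x - mu)^4 \<partial>M) = 3 * sg^2" "(\<integral>x. (Y x - mu) \<partial>M) = 0" by auto
qed


lemma fourth_moment_prod:
  fixes U V :: "'a \<Rightarrow> real"
  assumes iU2: "integrable M (\<lambda>x. (U x)^2)" and iV2: "integrable M (\<lambda>x. (V x)^2)"
    and iU4: "integrable M (\<lambda>x. (U x)^4)" and iV4: "integrable M (\<lambda>x. (V x)^4)"
    and iP2: "integrable M (\<lambda>x. (U x + V x)^2)" and iM2: "integrable M (\<lambda>x. (U x - V x)^2)"
    and iP4: "integrable M (\<lambda>x. (U x + V x)^4)" and iM4: "integrable M (\<lambda>x. (U x - V x)^4)"
    and eU: "(\<integral>x. (U x)^4 \<partial>M) = 3 * (\<integral>x. (U x)^2 \<partial>M)^2"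
    and eV: "(\<integral>x. (V x)^4 \<partial>M) = 3 * (\<integral>x. (V x)^2 \<partial>M)^2"
    and eP: "(\<integral>x. (U x + V x)^4 \<partial>M) = 3 * (\<integral>x. (U x + V x)^2 \<partial>M)^2"
    and eM: "(\<integral>x. (U x - V x)^4 \<partial>M) = 3 * (\<integral>x. (U x - V x)^2 \<partial>M)^2"
  shows "integrable M (\<lambda>x. U x * V x)"
    and "integrable M (\<lambda>x. (U x)^2 * (V x)^2)"
    and "(\<integral>x. (U x)^2 * (V x)^2 \<partial>M) =
          (\<integral>x. (U x)^2 \<partial>M) * (\<integral>x. (V x)^2 \<partial>M) + 2 * (\<integral>x. U x * V x \<partial>M)^2"
proof -
  have f1: "U x * V x = ((U x + V x)^2 - (U x - V x)^2) / 4" for x by (simp add: power2_eq_square field_simps)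
  have f2: "(U x)^2 * (V x)^2 = ((U x + V x)^4 + (U x - V x)^4 - 2 * (U x)^4 - 2 * (V x)^4) / 12" for x
    by (simp add: field_simps) algebra
  show iUV: "integrable M (\<lambda>x. U x * V x)" unfolding f1 using iP2 iM2 by auto
  show "integrable M (\<lambda>x. (U x)^2 * (V x)^2)" unfolding f2 using iP4 iM4 iU4 iV4 by auto
  define a where "a = (\<integral>x. (U x)^2 \<partial>M)"
  define b where "b = (\<integral>x. (V x)^2 \<partial>M)"
  define c where "c = (\<integral>x. U x * V x \<partial>M)"
  have f3: "(U x + V x)^2 = (U x)^2 + (V x)^2 + 2 * (U x * V x)" for x by (simp add: power2_eq_square algebra_simps)
  have f4: "(U x - V x)^2 = (U x)^2 + (V x)^2 - 2 * (U x * V x)" for x by (simp add: power2_eq_square algebra_simps)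
  have p: "(\<integral>x. (U x + V x)^2 \<partial>M) = a + b + 2 * c" unfolding f3 a_def b_def c_def
    using iU2 iV2 iUV by simp
  have m: "(\<integral>x. (U x - V x)^2 \<partial>M) = a + b - 2 * c" unfolding f4 a_def b_def c_def
    using iU2 iV2 iUV by simp
  have "(\<integral>x. (U x)^2 * (V x)^2 \<partial>M) = ((\<integral>x. (U x + V x)^4 \<partial>M) + (\<integral>x. (U x - V x)^4 \<partial>M)
      - 2 * (\<integral>x. (U x)^4 \<partial>M) - 2 * (\<integral>x. (V x)^4 \<partial>M)) / 12"
    unfolding f2 using iP4 iM4 iU4 iV4 by simp
  also have "\<dots> = a * b + 2 * c^2" unfolding eP eM eU eV p m a_def[symmetric] b_def[symmetric]
    by (simp add: power2_eq_square algebra_simps)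
  finally show "(\<integral>x. (U x)^2 * (V x)^2 \<partial>M) =
          (\<integral>x. (U x)^2 \<partial>M) * (\<integral>x. (V x)^2 \<partial>M) + 2 * (\<integral>x. U x * V x \<partial>M)^2"
    by (simp add: a_def b_def c_def)
qed

definition lin :: "nat \<Rightarrow> (nat \<Rightarrow> 'a \<Rightarrow> real) \<Rightarrow> (nat \<Rightarrow> real) \<Rightarrow> 'a \<Rightarrow> real" where
  "lin n X c \<omega> = (\<Sum>i<n. c i * X i \<omega>)"

lemma lin_add: "lin n X a \<omega> + lin n X b \<omega> = lin n X (\<lambda>i. a i + b i) \<omega>"
  unfolding lin_def by (simp add: sum.distrib distrib_right)
lemma lin_diff: "lin n X a \<omega> - lin n X b \<omega> = lin n X (\<lambda>i. a i - b i) \<omega>"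
  unfolding lin_def by (simp add: sum_subtractf left_diff_distrib)
lemma lin_unit: "k < n \<Longrightarrow> lin n X (\<lambda>i. if i = k then 1 else 0) \<omega> = X k \<omega>"
proof -
  assume k: "k < n"
  have "(\<Sum>i<n. (if i = k then 1 else 0) * X i \<omega>) = (\<Sum>i<n. if i = k then X i \<omega> else 0)"
    by (rule sum.cong) auto
  then show ?thesis using k by (simp add: lin_def)
qed
lemma lin_unit': "k < n \<Longrightarrow> lin n X (\<lambda>i. if i = k then 1 else 0) = X k"
  by (rule ext, erule lin_unit)

locale jn = prob_space M for M :: "'a measure" +
  fixes n :: nat and X :: "nat \<Rightarrow> 'a \<Rightarrow> real"
  assumes jn: "jointly_normal M n X"
    and mean0: "\<And>i. i < n \<Longrightarrow> (\<integral>\<omega>. X i \<omega> \<partial>M) = 0"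
begin

lemma Xm[measurable]: "i < n \<Longrightarrow> X i \<in> borel_measurable M"
  using jn by (auto simp: jointly_normal_def)

lemma lin_meas[measurable]: "lin n X c \<in> borel_measurable M"
  unfolding lin_def[abs_def] using Xm by measurable

lemma lin_int: "integrable M (lin n X c)"
proof -
  obtain mu sg where N: "normal_rv M (lin n X c) mu sg"
    using jn unfolding jointly_normal_def lin_def[abs_def] by blast
  have "integrable M (\<lambda>x. (lin n X c x - mu)^1)"
    by (rule normal_rv_moments(1)[OF prob_space_axioms N])
  then have "integrable M (\<lambda>x. (lin n X c x - mu) + mu)" by (intro Bochner_Integration.integrable_add) auto
  then show ?thesis by simp
qed

lemma X_int: "i < n \<Longrightarrow> integrable M (X i)"
  using lin_int[of "\<lambda>j. if j = i then 1 else 0"] lin_unit'[of i n X] by simp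

lemma lin_mean: "(\<integral>\<omega>. lin n X c \<omega> \<partial>M) = 0"
  unfolding lin_def using X_int mean0 by simp

lemma lin_normal: "\<exists>sg. normal_rv M (lin n X c) 0 sg"
proof -
  obtain mu sg where N: "normal_rv M (lin n X c) mu sg"
    using jn unfolding jointly_normal_def lin_def[abs_def] by blast
  have "(\<integral>x. (lin n X c x - mu) \<partial>M) = 0"
    by (rule normal_rv_moments(4)[OF prob_space_axioms N])
  then have "mu = 0" using lin_int[of c] lin_mean[of c] by (simp add: prob_space)
  then show ?thesis using N by blast
qed

lemma lin_pow_int: "integrable M (\<lambda>\<omega>. (lin n X c \<omega>)^k)"
  using lin_normal[of c] normal_rv_moments(1)[OF prob_space_axioms] by fastforce

lemma lin_4: "(\<integral>\<omega>. (lin n X c \<omega>)^4 \<partial>M) = 3 * (\<integral>\<omega>. (lin n X c \<omega>)^2 \<partial>M)^2"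
proof -
  obtain sg where N: "normal_rv M (lin n X c) 0 sg" using lin_normal by blast
  show ?thesis using normal_rv_moments(2,3)[OF prob_space_axioms N] by simp
qed

lemma lin_prod:
  shows "integrable M (\<lambda>x. lin n X a x * lin n X b x)"
    and "integrable M (\<lambda>x. (lin n X a x)^2 * (lin n X b x)^2)"
    and "(\<integral>x. (lin n X a x)^2 * (lin n X b x)^2 \<partial>M) =
          (\<integral>x. (lin n X a x)^2 \<partial>M) * (\<integral>x. (lin n X b x)^2 \<partial>M) + 2 * (\<integral>x. lin n X a x * lin n X b x \<partial>M)^2"
proof -
  have P: "integrable M (\<lambda>x. (lin n X a x + lin n X b x)^k)" for k unfolding lin_add by (rule lin_pow_int)
  have Mi: "integrable M (\<lambda>x. (lin n X a x - lin n X b x)^k)" for k unfolding lin_diff by (rule lin_pow_int)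
  have P4: "(\<integral>x. (lin n X a x + lin n X b x)^4 \<partial>M) = 3 * (\<integral>x. (lin n X a x + lin n X b x)^2 \<partial>M)^2"
    unfolding lin_add by (rule lin_4)
  have M4: "(\<integral>x. (lin n X a x - lin n X b x)^4 \<partial>M) = 3 * (\<integral>x. (lin n X a x - lin n X b x)^2 \<partial>M)^2"
    unfolding lin_diff by (rule lin_4)
  note F = fourth_moment_prod[of M "lin n X a" "lin n X b", OF lin_pow_int lin_pow_int lin_pow_int lin_pow_int
     P Mi P Mi lin_4 lin_4 P4 M4]
  show "integrable M (\<lambda>x. lin n X a x * lin n X b x)" by (rule F(1))
  show "integrable M (\<lambda>x. (lin n X a x)^2 * (lin n X b x)^2)" by (rule F(2))
  show "(\<integral>x. (lin n X a x)^2 * (lin n X b x)^2 \<partial>M) =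
          (\<integral>x. (lin n X a x)^2 \<partial>M) * (\<integral>x. (lin n X b x)^2 \<partial>M) + 2 * (\<integral>x. lin n X a x * lin n X b x \<partial>M)^2"
    by (rule F(3))
qed

lemma XX_int: "k < n \<Longrightarrow> l < n \<Longrightarrow> integrable M (\<lambda>x. X k x * X l x)"
  using lin_prod(1)[of "\<lambda>j. if j = k then 1 else 0" "\<lambda>j. if j = l then 1 else 0"] lin_unit'[of _ n X]
  by simp

lemma lin_cov: "(\<integral>x. lin n X a x * lin n X b x \<partial>M) = (\<Sum>k<n. \<Sum>l<n. a k * b l * (\<integral>x. X k x * X l x \<partial>M))"
proof -
  have "lin n X a x * lin n X b x = (\<Sum>k<n. \<Sum>l<n. a k * b l * (X k x * X l x))" for x
    unfolding lin_def sum_product by (intro sum.cong refl) (simp add: mult_ac)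
  then have "(\<integral>x. lin n X a x * lin n X b x \<partial>M) = (\<integral>x. (\<Sum>k<n. \<Sum>l<n. a k * b l * (X k x * X l x)) \<partial>M)"
    by simp
  also have "\<dots> = (\<Sum>k<n. (\<integral>x. (\<Sum>l<n. a k * b l * (X k x * X l x)) \<partial>M))"
    by (rule Bochner_Integration.integral_sum[where M=M and I="{..<n}" and f="\<lambda>k x. (\<Sum>l<n. a k * b l * (X k x * X l x))"]) (auto intro!: integrable_sum integrable_mult_right XX_int)
  also have "\<dots> = (\<Sum>k<n. \<Sum>l<n. a k * b l * (\<integral>x. X k x * X l x \<partial>M))"
  proof (intro sum.cong refl)
    fix k assume "k \<in> {..<n}"
    then show "(\<integral>x. (\<Sum>l<n. a k * b l * (X k x * X l x)) \<partial>M) = (\<Sum>l<n. a k * b l * (\<integral>x. X k x * X l x \<partial>M))"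
      by (subst Bochner_Integration.integral_sum[where M=M and I="{..<n}" and f="\<lambda>l x. a k * b l * (X k x * X l x)"]) (auto intro!: integrable_mult_right XX_int)
  qed
  finally show ?thesis .
qed

end


lemma sum_delta_l: "j < (n::nat) \<Longrightarrow> (\<Sum>l<n. (if j = l then 1 else 0) * f l) = (f j :: real)"
proof -
  assume j: "j < n"
  have "(\<Sum>l<n. (if j = l then 1 else 0) * f l) = (\<Sum>l<n. if j = l then f l else 0)"
    by (rule sum.cong) auto
  also have "\<dots> = f j" using j by (subst sum.delta') auto
  finally show ?thesis .
qed

lemma bil_K:
  fixes a b :: "nat \<Rightarrow> real"
  shows "(\<Sum>k<n. \<Sum>l<n. a k * b l * (if k = l then 1 else \<rho>)) =
     \<rho> * (\<Sum>k<n. a k) * (\<Sum>l<n. b l) + (1 - \<rho>) * (\<Sum>k<n. a k * b k)"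
proof -
  have "(\<Sum>k<n. \<Sum>l<n. a k * b l * (if k = l then 1 else \<rho>)) =
        (\<Sum>k<n. \<Sum>l<n. \<rho> * (a k * b l) + (1 - \<rho>) * ((if k = l then 1 else 0) * (a k * b l)))"
    by (intro sum.cong refl) (auto simp: algebra_simps)
  also have "\<dots> = (\<Sum>k<n. \<rho> * (\<Sum>l<n. a k * b l) + (1 - \<rho>) * (a k * b k))"
  proof (intro sum.cong refl)
    fix k assume k: "k \<in> {..<n}"
    have "(\<Sum>l<n. (if k = l then 1 else 0) * (a k * b l)) = a k * b k"
      using sum_delta_l[of k n "\<lambda>l. a k * b l"] k by simp
    then show "(\<Sum>l<n. \<rho> * (a k * b l) + (1 - \<rho>) * ((if k = l then 1 else 0) * (a k * b l))) =
          \<rho> * (\<Sum>l<n. a k * b l) + (1 - \<rho>) * (a k * b k)"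
      by (simp add: sum.distrib sum_distrib_left[symmetric])
  qed
  also have "\<dots> = \<rho> * (\<Sum>k<n. a k) * (\<Sum>l<n. b l) + (1 - \<rho>) * (\<Sum>k<n. a k * b k)"
    by (simp add: sum.distrib sum_distrib_left[symmetric] sum_product mult.assoc)
  finally show ?thesis .
qed

definition cc :: "nat \<Rightarrow> nat \<Rightarrow> nat \<Rightarrow> real" where
  "cc n i k = (if i = k then 1 else 0) - 1 / real n"

lemma cc_sum: "i < n \<Longrightarrow> (\<Sum>k<n. cc n i k) = 0"
proof -
  assume i: "i < n"
  have "(\<Sum>k<n. cc n i k) = (\<Sum>k<n. (if i = k then 1 else 0)) - (\<Sum>k<n. 1 / real n)"
    unfolding cc_def by (simp add: sum_subtractf)
  also have "\<dots> = 0" using i by simp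
  finally show ?thesis .
qed

lemma cc_prod: "i < n \<Longrightarrow> j < n \<Longrightarrow> (\<Sum>k<n. cc n i k * cc n j k) = (if i = j then 1 else 0) - 1 / real n"
proof -
  assume i: "i < n" and j: "j < n"
  have s1: "(\<Sum>k<n. (if i = k then 1 else 0)) = (1::real)" using i by (simp add: sum.delta')
  have s2: "(\<Sum>k<n. (if j = k then 1 else 0)) = (1::real)" using j by (simp add: sum.delta')
  have s3: "(\<Sum>k<n. (if i = k then 1 else 0) * (if j = k then 1 else (0::real))) = (if i = j then 1 else 0)"
    using sum_delta_l[OF i, of "\<lambda>k. if j = k then 1 else 0"] by simp
  have e: "cc n i k * cc n j k = (if i = k then 1 else 0) * (if j = k then 1 else 0)
      - (if i = k then 1 else 0) / n - (if j = k then 1 else 0) / n + 1 / (real n * real n)" for k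
    using i unfolding cc_def by (cases "i = k"; cases "j = k") (simp_all add: field_simps)
  have "(\<Sum>k<n. cc n i k * cc n j k) =
    (\<Sum>k<n. (if i = k then 1 else 0) * (if j = k then 1 else 0)) - (\<Sum>k<n. (if i = k then 1 else 0)) / n
     - (\<Sum>k<n. (if j = k then 1 else 0)) / n + (\<Sum>k<n. 1 / (real n * real n))"
    unfolding e by (simp only: sum_subtractf sum.distrib sum_divide_distrib)
  also have "\<dots> = (if i = j then 1 else 0) - 1 / real n" unfolding s1 s2 s3 using i by simp
  finally show ?thesis .
qed

lemma cc_sq: "i < n \<Longrightarrow> (\<Sum>j<n. ((if i = j then 1 else 0) - 1 / real n)^2) = 1 - 1 / real n"
proof -
  assume i: "i < n"
  have "(\<Sum>j<n. ((if i = j then 1 else 0) - 1 / real n)^2) = (\<Sum>j<n. cc n i j * cc n i j)"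
    unfolding cc_def by (simp add: power2_eq_square)
  also have "\<dots> = 1 - 1 / real n" using cc_prod[OF i i] by simp
  finally show ?thesis .
qed


lemma cc_apply: "i < n \<Longrightarrow> (\<Sum>k<n. cc n i k * x k) = x i - (\<Sum>k<n. x k) / real n"
proof -
  assume i: "i < n"
  have "(\<Sum>k<n. cc n i k * x k) = (\<Sum>k<n. (if i = k then 1 else 0) * x k) - (\<Sum>k<n. x k) / real n"
    unfolding cc_def by (simp add: left_diff_distrib sum_subtractf sum_divide_distrib)
  then show ?thesis using sum_delta_l[OF i, of x] by simp
qed

lemma sv_eq:
  assumes n: "n > 0"
  shows "sample_var n x = (\<Sum>i<n. (\<Sum>k<n. cc n i k * x k)^2) / (real n - 1)"
proof -
  define S where "S = (\<Sum>k<n. x k)"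
  have a: "(\<Sum>i<n. \<Sum>j<n. x i * ((if i = j then 1 else 0) - 1 / real n) * x j) = (\<Sum>i<n. x i * (x i - S / n))"
  proof (intro sum.cong refl)
    fix i assume "i \<in> {..<n}"
    then have i: "i < n" by simp
    have "(\<Sum>j<n. x i * ((if i = j then 1 else 0) - 1 / real n) * x j) = x i * (\<Sum>j<n. cc n i j * x j)"
      unfolding cc_def by (simp add: sum_distrib_left mult.assoc)
    then show "(\<Sum>j<n. x i * ((if i = j then 1 else 0) - 1 / real n) * x j) = x i * (x i - S / n)"
      using cc_apply[OF i, of x] by (simp add: S_def)
  qed
  have b: "(\<Sum>i<n. (\<Sum>k<n. cc n i k * x k)^2) = (\<Sum>i<n. (x i - S / n)^2)"
    by (intro sum.cong refl) (simp add: cc_apply S_def)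
  have c: "(\<Sum>i<n. (x i - S / n)^2) = (\<Sum>i<n. x i * (x i - S / n)) - (S / n) * (\<Sum>i<n. (x i - S / n))"
    by (simp add: power2_eq_square sum_distrib_left sum_subtractf[symmetric] algebra_simps)
  have d: "(\<Sum>i<n. (x i - S / n)) = 0" using n by (simp add: sum_subtractf S_def)
  show ?thesis unfolding sample_var_def a b c d by simp
qed

locale jnr = jn +
  fixes \<rho> :: real
  assumes K: "\<And>k l. k < n \<Longrightarrow> l < n \<Longrightarrow> (\<integral>x. X k x * X l x \<partial>M) = (if k = l then 1 else \<rho>)"
    and n2: "n \<ge> 2"
begin

abbreviation "Y i \<equiv> lin n X (cc n i)"

lemma EYY: "i < n \<Longrightarrow> j < n \<Longrightarrow> (\<integral>x. Y i x * Y j x \<partial>M) = (1 - \<rho>) * ((if i = j then 1 else 0) - 1 / real n)"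
proof -
  assume i: "i < n" and j: "j < n"
  have "(\<integral>x. Y i x * Y j x \<partial>M) = (\<Sum>k<n. \<Sum>l<n. cc n i k * cc n j l * (if k = l then 1 else \<rho>))"
    unfolding lin_cov by (intro sum.cong refl) (simp add: K)
  also have "\<dots> = (1 - \<rho>) * ((if i = j then 1 else 0) - 1 / real n)"
    unfolding bil_K cc_sum[OF i] cc_sum[OF j] cc_prod[OF i j] by simp
  finally show ?thesis .
qed

lemma EY2: "i < n \<Longrightarrow> (\<integral>x. (Y i x)^2 \<partial>M) = (1 - \<rho>) * (1 - 1 / real n)"
  using EYY[of i i] by (simp add: power2_eq_square)

definition Q :: "'a \<Rightarrow> real" where "Q \<omega> = (\<Sum>i<n. (Y i \<omega>)^2)"

lemma Q_meas[measurable]: "Q \<in> borel_measurable M"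
  unfolding Q_def[abs_def] by measurable

lemma Q_int: "integrable M Q"
  unfolding Q_def[abs_def] using lin_pow_int by auto

lemma Q_sq: "(Q \<omega>)^2 = (\<Sum>i<n. \<Sum>j<n. (Y i \<omega>)^2 * (Y j \<omega>)^2)"
  unfolding Q_def power2_eq_square[of "sum _ _"] sum_product by simp

lemma Q2_int: "integrable M (\<lambda>\<omega>. (Q \<omega>)^2)"
  unfolding Q_sq using lin_prod(2) by auto

lemma EQ: "(\<integral>\<omega>. Q \<omega> \<partial>M) = (1 - \<rho>) * (real n - 1)"
proof -
  have "(\<integral>\<omega>. Q \<omega> \<partial>M) = (\<Sum>i<n. (\<integral>x. (Y i x)^2 \<partial>M))"
    unfolding Q_def[abs_def] using lin_pow_int by (simp add: Bochner_Integration.integral_sum)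
  also have "\<dots> = (\<Sum>i<n. (1 - \<rho>) * (1 - 1 / real n))" by (intro sum.cong refl) (simp add: EY2)
  also have "\<dots> = (1 - \<rho>) * (real n - 1)" using n2 by (simp add: field_simps)
  finally show ?thesis .
qed

lemma EQ2: "(\<integral>\<omega>. (Q \<omega>)^2 \<partial>M) = ((1 - \<rho>) * (real n - 1))^2 + 2 * (1 - \<rho>)^2 * (real n - 1)"
proof -
  have "(\<integral>\<omega>. (Q \<omega>)^2 \<partial>M) = (\<Sum>i<n. \<Sum>j<n. (\<integral>x. (Y i x)^2 * (Y j x)^2 \<partial>M))"
    unfolding Q_sq using lin_prod(2) by (simp add: Bochner_Integration.integral_sum)
  also have "\<dots> = (\<Sum>i<n. \<Sum>j<n. ((1 - \<rho>) * (1 - 1 / real n))^2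
        + 2 * (1 - \<rho>)^2 * ((if i = j then 1 else 0) - 1 / real n)^2)"
    unfolding lin_prod(3) by (intro sum.cong refl) (simp add: EY2 EYY power2_eq_square power_mult_distrib)
  also have "\<dots> = (\<Sum>i<n. real n * ((1 - \<rho>) * (1 - 1 / real n))^2
        + 2 * (1 - \<rho>)^2 * (1 - 1 / real n))"
    by (intro sum.cong refl) (simp add: sum.distrib sum_distrib_left[symmetric] cc_sq)
  also have "\<dots> = ((1 - \<rho>) * (real n - 1))^2 + 2 * (1 - \<rho>)^2 * (real n - 1)"
    using n2 by (simp add: field_simps power2_eq_square)
  finally show ?thesis .
qed

lemma varQ: "variance Q = 2 * (1 - \<rho>)^2 * (real n - 1)"
  using variance_eq[OF Q_int Q2_int] EQ EQ2 by simp

lemma sv_Q: "\<omega> \<in> space M \<Longrightarrow> sample_var n (\<lambda>i. X i \<omega>) = Q \<omega> / (real n - 1)"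
  using sv_eq[of n "\<lambda>i. X i \<omega>"] n2 unfolding Q_def lin_def by simp

lemma sv_nonneg: "\<omega> \<in> space M \<Longrightarrow> sample_var n (\<lambda>i. X i \<omega>) \<ge> 0"
  using sv_Q n2 unfolding Q_def by (auto intro!: divide_nonneg_nonneg sum_nonneg)

lemma cheb:
  assumes t: "t > 0"
  shows "prob {\<omega> \<in> space M. \<bar>sample_var n (\<lambda>i. X i \<omega>) - (1 - \<rho>)\<bar> \<ge> t} \<le> 2 * (1 - \<rho>)^2 / ((real n - 1) * t^2)"
proof -
  have n1: "real n - 1 > 0" using n2 by simp
  have "{\<omega> \<in> space M. \<bar>sample_var n (\<lambda>i. X i \<omega>) - (1 - \<rho>)\<bar> \<ge> t} =
        {\<omega> \<in> space M. \<bar>Q \<omega> - (\<integral>\<omega>. Q \<omega> \<partial>M)\<bar> \<ge> t * (real n - 1)}"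
  proof -
    have "\<bar>Q \<omega> / (real n - 1) - (1 - \<rho>)\<bar> = \<bar>Q \<omega> - (1 - \<rho>) * (real n - 1)\<bar> / (real n - 1)" for \<omega>
      using n1 by (simp add: field_simps abs_divide[symmetric])
    then show ?thesis using n1 by (auto simp: sv_Q EQ pos_le_divide_eq)
  qed
  also have "prob \<dots> \<le> variance Q / (t * (real n - 1))^2"
    by (rule Chebyshev_inequality) (use t n1 Q2_int in auto)
  also have "\<dots> = 2 * (1 - \<rho>)^2 / ((real n - 1) * t^2)"
  proof -
    have "\<And>c m :: real. m > 0 \<Longrightarrow> c * m / (t * m)^2 = c / (m * t^2)"
      using t by (simp add: power2_eq_square field_simps)
    from this[OF n1, of "2 * (1 - \<rho>)^2"] show ?thesis unfolding varQ .
  qed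
  finally show ?thesis .
qed

end


lemma sqrt_diff_le:
  fixes A B :: real assumes A: "A > 0" and B: "B \<ge> 0"
  shows "\<bar>sqrt A - sqrt B\<bar> \<le> \<bar>A - B\<bar> / sqrt A"
proof -
  have sA: "sqrt A > 0" using A by simp
  have e: "(sqrt A - sqrt B) * (sqrt A + sqrt B) = A - B"
    using A B by (simp add: algebra_simps)
  have "\<bar>sqrt A - sqrt B\<bar> * (sqrt A + sqrt B) = \<bar>(sqrt A - sqrt B) * (sqrt A + sqrt B)\<bar>"
    using A B by (simp only: abs_mult) simp
  then have "\<bar>sqrt A - sqrt B\<bar> * (sqrt A + sqrt B) = \<bar>A - B\<bar>" using e by simp
  moreover have "\<bar>sqrt A - sqrt B\<bar> * sqrt A \<le> \<bar>sqrt A - sqrt B\<bar> * (sqrt A + sqrt B)"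
    using B by (intro mult_left_mono) auto
  ultimately show ?thesis using sA by (simp add: pos_le_divide_eq)
qed

lemma inv_min_sq:
  fixes p q :: real assumes "p > 0" "q > 0"
  shows "1 / (min p q)^2 \<le> 1 / p^2 + 1 / q^2"
  using assms by (cases "p \<le> q") (auto simp: min_def)

context jnr
begin

lemma bound:
  assumes r: "0 < \<rho>" "\<rho> < 1" and a: "a \<ge> 0" and e: "\<epsilon> > 0"
  shows "prob {\<omega> \<in> space M. \<bar>sqrt a * (sqrt (1 - \<rho>) - sqrt (1 - rho_hat n (\<lambda>i. X i \<omega>)))\<bar> > \<epsilon>}
     \<le> 2 * (1 - \<rho>)^2 * (4 / \<rho>^2 + (a + 1) / (\<epsilon>^2 * (1 - \<rho>))) / (real n - 1)"
proof -
  define q where "q = \<epsilon> * sqrt (1 - \<rho>) / sqrt (a + 1)"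
  define t where "t = min (\<rho> / 2) q"
  have q: "q > 0" using r a e by (simp add: q_def)
  have t: "t > 0" using q r by (simp add: t_def)
  have n1: "real n - 1 > 0" using n2 by simp
  define B where "B = {\<omega> \<in> space M. \<bar>Q \<omega> / (real n - 1) - (1 - \<rho>)\<bar> \<ge> t}"
  have Bm: "B \<in> sets M" unfolding B_def by measurable
  have B_eq: "B = {\<omega> \<in> space M. \<bar>sample_var n (\<lambda>i. X i \<omega>) - (1 - \<rho>)\<bar> \<ge> t}"
    unfolding B_def using sv_Q by auto
  have sub: "{\<omega> \<in> space M. \<bar>sqrt a * (sqrt (1 - \<rho>) - sqrt (1 - rho_hat n (\<lambda>i. X i \<omega>)))\<bar> > \<epsilon>} \<subseteq> B"
  proof (rule subsetI, rule ccontr)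
    fix \<omega> assume w: "\<omega> \<in> {\<omega> \<in> space M. \<bar>sqrt a * (sqrt (1 - \<rho>) - sqrt (1 - rho_hat n (\<lambda>i. X i \<omega>)))\<bar> > \<epsilon>}"
      and nB: "\<omega> \<notin> B"
    define s where "s = sample_var n (\<lambda>i. X i \<omega>)"
    have sp: "\<omega> \<in> space M" using w by simp
    have s0: "s \<ge> 0" using sv_nonneg[OF sp] by (simp add: s_def)
    have st: "\<bar>s - (1 - \<rho>)\<bar> < t" using nB sp by (simp add: B_eq s_def not_le)
    then have "s - (1 - \<rho>) < \<rho> / 2" using st unfolding t_def by linarith
    then have "s < 1" using r by linarith
    then have rh: "1 - rho_hat n (\<lambda>i. X i \<omega>) = s" by (simp add: rho_hat_def s_def)
    have "\<bar>sqrt (1 - \<rho>) - sqrt s\<bar> \<le> \<bar>(1 - \<rho>) - s\<bar> / sqrt (1 - \<rho>)"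
      by (rule sqrt_diff_le) (use r s0 in auto)
    also have "\<dots> \<le> t / sqrt (1 - \<rho>)"
      using st r by (intro divide_right_mono) (auto simp: abs_minus_commute)
    also have "\<dots> \<le> q / sqrt (1 - \<rho>)"
      using r by (intro divide_right_mono) (auto simp: t_def)
    also have "\<dots> = \<epsilon> / sqrt (a + 1)" using r by (simp add: q_def)
    finally have d: "\<bar>sqrt (1 - \<rho>) - sqrt s\<bar> \<le> \<epsilon> / sqrt (a + 1)" .
    have "\<bar>sqrt a * (sqrt (1 - \<rho>) - sqrt s)\<bar> = sqrt a * \<bar>sqrt (1 - \<rho>) - sqrt s\<bar>"
      using a by (simp add: abs_mult)
    also have "\<dots> \<le> sqrt a * (\<epsilon> / sqrt (a + 1))" using d a by (intro mult_left_mono) auto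
    also have "\<dots> \<le> sqrt (a + 1) * (\<epsilon> / sqrt (a + 1))"
      using a e by (intro mult_right_mono) auto
    also have "\<dots> = \<epsilon>" using a by simp
    finally show False using w rh by simp
  qed
  have "prob {\<omega> \<in> space M. \<bar>sqrt a * (sqrt (1 - \<rho>) - sqrt (1 - rho_hat n (\<lambda>i. X i \<omega>)))\<bar> > \<epsilon>} \<le> prob B"
    by (rule finite_measure_mono[OF sub Bm])
  also have "\<dots> \<le> 2 * (1 - \<rho>)^2 / ((real n - 1) * t^2)" unfolding B_eq by (rule cheb[OF t])
  also have "\<dots> = 2 * (1 - \<rho>)^2 * (1 / t^2) / (real n - 1)" by simp
  also have "\<dots> \<le> 2 * (1 - \<rho>)^2 * (1 / (\<rho> / 2)^2 + 1 / q^2) / (real n - 1)"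
    unfolding t_def using n1 r q
    by (intro divide_right_mono mult_left_mono inv_min_sq) auto
  also have "1 / q^2 = (a + 1) / (\<epsilon>^2 * (1 - \<rho>))"
    using r a e by (simp add: q_def power_divide power_mult_distrib)
  also have "1 / (\<rho> / 2)^2 = 4 / \<rho>^2" by (simp add: power_divide)
  finally show ?thesis .
qed

end


lemma core:
  fixes \<rho> :: real and M :: "nat \<Rightarrow> 'a measure" and X :: "nat \<Rightarrow> nat \<Rightarrow> 'a \<Rightarrow> real"
    and a :: "nat \<Rightarrow> real"
  assumes rho: "0 < \<rho>" "\<rho> < 1"
    and J: "\<And>n. n \<ge> 2 \<Longrightarrow> jnr (M n) n (X n) \<rho>"
    and a0: "\<And>n. a n \<ge> 0" and ao: "a \<in> o(\<lambda>n. real n)" and e: "\<epsilon> > 0"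
  shows "(\<lambda>n. measure (M n) {\<omega> \<in> space (M n).
              \<bar>sqrt (a n) * (sqrt (1 - \<rho>) - sqrt (1 - rho_hat n (\<lambda>i. X n i \<omega>)))\<bar> > \<epsilon>})
              \<longlonglongrightarrow> 0"
proof (rule tendsto_sandwich[of "\<lambda>_. 0" _ _ "\<lambda>n. 2 * (1 - \<rho>)^2 * (4 / \<rho>^2 + (a n + 1) / (\<epsilon>^2 * (1 - \<rho>))) / (real n - 1)"])
  show "\<forall>\<^sub>F n in sequentially. 0 \<le> measure (M n) {\<omega> \<in> space (M n).
              \<bar>sqrt (a n) * (sqrt (1 - \<rho>) - sqrt (1 - rho_hat n (\<lambda>i. X n i \<omega>)))\<bar> > \<epsilon>}"
    by simp
  show "\<forall>\<^sub>F n in sequentially. measure (M n) {\<omega> \<in> space (M n).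
              \<bar>sqrt (a n) * (sqrt (1 - \<rho>) - sqrt (1 - rho_hat n (\<lambda>i. X n i \<omega>)))\<bar> > \<epsilon>}
         \<le> 2 * (1 - \<rho>)^2 * (4 / \<rho>^2 + (a n + 1) / (\<epsilon>^2 * (1 - \<rho>))) / (real n - 1)"
    using eventually_ge_at_top[of 2]
  proof eventually_elim
    case (elim n)
    interpret jnr "M n" n "X n" \<rho> using J[OF elim] .
    show ?case using bound[OF rho a0[of n] e] .
  qed
  show "(\<lambda>_. 0) \<longlonglongrightarrow> (0::real)" by simp
  have l1: "(\<lambda>n. a n / real n) \<longlonglongrightarrow> 0" using smalloD_tendsto[OF ao] .
  have l2: "(\<lambda>n. real n / (real n - 1)) \<longlonglongrightarrow> 1" by real_asymp
  have l3: "(\<lambda>n. 1 / (real n - 1)) \<longlonglongrightarrow> 0" by real_asymp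
  have l4: "(\<lambda>n. a n / real n * (real n / (real n - 1))) \<longlonglongrightarrow> 0"
    using tendsto_mult[OF l1 l2] by simp
  have "\<forall>\<^sub>F n in sequentially. a n / real n * (real n / (real n - 1)) = a n / (real n - 1)"
    using eventually_ge_at_top[of 1] by eventually_elim simp
  from tendsto_cong[OF this] l4 have l5: "(\<lambda>n. a n / (real n - 1)) \<longlonglongrightarrow> 0" by simp
  have l6: "(\<lambda>n. 2 * (1 - \<rho>)^2 * (4 / \<rho>^2 * (1 / (real n - 1)) + 1 / (\<epsilon>^2 * (1 - \<rho>)) * (a n / (real n - 1) + 1 / (real n - 1))))
     \<longlonglongrightarrow> 2 * (1 - \<rho>)^2 * (4 / \<rho>^2 * 0 + 1 / (\<epsilon>^2 * (1 - \<rho>)) * (0 + 0))"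
    by (intro tendsto_intros l3 l5)
  have eq: "2 * (1 - \<rho>)^2 * (4 / \<rho>^2 + (a n + 1) / (\<epsilon>^2 * (1 - \<rho>))) / (real n - 1) =
     2 * (1 - \<rho>)^2 * (4 / \<rho>^2 * (1 / (real n - 1)) + 1 / (\<epsilon>^2 * (1 - \<rho>)) * (a n / (real n - 1) + 1 / (real n - 1)))" for n
  proof -
    have g: "x * (p + (b + 1) / s) / m = x * (p * (1 / m) + 1 / s * (b / m + 1 / m))" for x p b s m :: real
      by (cases "m = 0"; cases "s = 0") (simp_all add: field_simps)
    show ?thesis by (rule g)
  qed
  show "(\<lambda>n. 2 * (1 - \<rho>)^2 * (4 / \<rho>^2 + (a n + 1) / (\<epsilon>^2 * (1 - \<rho>))) / (real n - 1)) \<longlonglongrightarrow> 0"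
    unfolding eq using l6 by simp
qed

theorem theorem1:
  fixes \<rho> :: real and M :: "nat \<Rightarrow> 'a measure" and X :: "nat \<Rightarrow> nat \<Rightarrow> 'a \<Rightarrow> real"
  assumes rho: "0 < \<rho>" "\<rho> < 1"
    and ps: "\<And>n. n \<ge> 2 \<Longrightarrow> prob_space (M n)"
    and gauss: "\<And>n. n \<ge> 2 \<Longrightarrow> jointly_normal (M n) n (X n)"
    and mean: "\<And>n i. n \<ge> 2 \<Longrightarrow> i < n \<Longrightarrow> (\<integral>\<omega>. X n i \<omega> \<partial>M n) = 0"
    and second: "\<And>n i. n \<ge> 2 \<Longrightarrow> i < n \<Longrightarrow> (\<integral>\<omega>. (X n i \<omega>)\<^sup>2 \<partial>M n) = 1"
    and corr: "\<And>n i j. n \<ge> 2 \<Longrightarrow> i < n \<Longrightarrow> j < n \<Longrightarrow> i \<noteq> j \<Longrightarrow>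
                 correlation (M n) (X n i) (X n j) = \<rho>"
  shows "(\<forall>a :: nat \<Rightarrow> real. (\<forall>n. a n > 0) \<longrightarrow> a \<in> o(\<lambda>n. real n) \<longrightarrow>
           (\<forall>\<epsilon>>0. (\<lambda>n. measure (M n) {\<omega> \<in> space (M n).
              \<bar>sqrt (a n) * (sqrt (1 - \<rho>) - sqrt (1 - rho_hat n (\<lambda>i. X n i \<omega>)))\<bar> > \<epsilon>})
              \<longlonglongrightarrow> 0))
       \<and> (\<forall>\<epsilon>>0. (\<lambda>n. measure (M n) {\<omega> \<in> space (M n).
              \<bar>sqrt (2 * ln (real n)) * (sqrt (1 - \<rho>) - sqrt (1 - rho_hat n (\<lambda>i. X n i \<omega>)))\<bar> > \<epsilon>})
              \<longlonglongrightarrow> 0)"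
proof -
  have J: "jnr (M n) n (X n) \<rho>" if n: "n \<ge> 2" for n
  proof -
    have K: "(\<integral>x. X n k x * X n l x \<partial>M n) = (if k = l then 1 else \<rho>)" if k: "k < n" and l: "l < n" for k l
    proof (cases "k = l")
      case True
      then show ?thesis using second[OF n k] by (simp add: power2_eq_square)
    next
      case False
      have ck: "covariance (M n) (X n k) (X n k) = 1"
        using second[OF n k] mean[OF n k] by (simp add: covariance_def power2_eq_square)
      have cl: "covariance (M n) (X n l) (X n l) = 1"
        using second[OF n l] mean[OF n l] by (simp add: covariance_def power2_eq_square)
      have "covariance (M n) (X n k) (X n l) = (\<integral>x. X n k x * X n l x \<partial>M n)"
        using mean[OF n k] mean[OF n l] by (simp add: covariance_def)
      then show ?thesis using corr[OF n k l False] False by (simp add: correlation_def ck cl)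
    qed
    show ?thesis
      unfolding jnr_def jn_def jnr_axioms_def jn_axioms_def
      using ps[OF n] gauss[OF n] mean[OF n] K n by auto
  qed
  show ?thesis
  proof
    show "\<forall>a :: nat \<Rightarrow> real. (\<forall>n. a n > 0) \<longrightarrow> a \<in> o(\<lambda>n. real n) \<longrightarrow>
           (\<forall>\<epsilon>>0. (\<lambda>n. measure (M n) {\<omega> \<in> space (M n).
              \<bar>sqrt (a n) * (sqrt (1 - \<rho>) - sqrt (1 - rho_hat n (\<lambda>i. X n i \<omega>)))\<bar> > \<epsilon>})
              \<longlonglongrightarrow> 0)"
    proof (intro allI impI)
      fix a :: "nat \<Rightarrow> real" and \<epsilon> :: real
      assume "\<forall>n. a n > 0" "a \<in> o(\<lambda>n. real n)" "\<epsilon> > 0"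
      then show "(\<lambda>n. measure (M n) {\<omega> \<in> space (M n).
              \<bar>sqrt (a n) * (sqrt (1 - \<rho>) - sqrt (1 - rho_hat n (\<lambda>i. X n i \<omega>)))\<bar> > \<epsilon>})
              \<longlonglongrightarrow> 0"
        using core[OF rho J, of a \<epsilon>] by (simp add: less_imp_le)
    qed
    show "\<forall>\<epsilon>>0. (\<lambda>n. measure (M n) {\<omega> \<in> space (M n).
              \<bar>sqrt (2 * ln (real n)) * (sqrt (1 - \<rho>) - sqrt (1 - rho_hat n (\<lambda>i. X n i \<omega>)))\<bar> > \<epsilon>})
              \<longlonglongrightarrow> 0"
    proof (intro allI impI)
      fix \<epsilon> :: real assume e: "\<epsilon> > 0"
      have a0: "2 * ln (real n) \<ge> 0" for n by (cases "n = 0") auto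
      have ao: "(\<lambda>n. 2 * ln (real n)) \<in> o(\<lambda>n. real n)" by real_asymp
      show "(\<lambda>n. measure (M n) {\<omega> \<in> space (M n).
              \<bar>sqrt (2 * ln (real n)) * (sqrt (1 - \<rho>) - sqrt (1 - rho_hat n (\<lambda>i. X n i \<omega>)))\<bar> > \<epsilon>})
              \<longlonglongrightarrow> 0"
        using core[OF rho J a0 ao e] by simp
    qed
  qed
qed

end
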